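(* Let $d=\infty$, $C>0$, ${\boldsymbol\gamma}\in\mathcal S_{d,C}$ and ${\boldsymbol\gamma}^\uparrow=T^\uparrow_{d,C}{\boldsymbol\gamma}$. For ${\boldsymbol\gamma}\in\mathcal W_d$ and $\tau>0$ write ${\boldsymbol\gamma}^{1/\tau}=(\gamma_u^{1/\tau})_{u\in\mathcal U_d}$. Then: (1) for every $\tau>0$, if $\sum_{u\in\mathcal U_d}(\gamma^\uparrow_u)^{1/\tau}<\infty$ then ${\boldsymbol\gamma}^{1/\tau}\in\mathcal S_{d,C^{1/\tau}}$; (2) for every $\tau\ge1$, if ${\boldsymbol\gamma}^{1/\tau}\in\mathcal S_{d,\sqrt2\,C^{1/\tau}}$ then $\sum_{u\in\mathcal U_d}(\gamma^\uparrow_u)^{1/\tau}<\infty$.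
   Context: Let $\mathcal U_\infty$ be the set of all finite subsets of $\mathbb N$. Weights are families ${\boldsymbol\gamma}=(\gamma_u)_{u\in\mathcal U_\infty}$ of non-negative reals; $\mathcal W_\infty$ is the set of all weights. For $C>0$, $\mathcal S_{\infty,C}=\{{\boldsymbol\gamma}\in\mathcal W_\infty:\sum_{v\in\mathcal U_\infty}C^{2|v|}\gamma_v<\infty\}$, and $T^\uparrow_{\infty,C}\colon\mathcal S_{\infty,C}\to\mathcal W_\infty$ is given by $(T^\uparrow_{\infty,C}{\boldsymbol\gamma})_u=\sum_{v\in\mathcal U_\infty,\,u\subseteq v}C^{2|v|}\gamma_v$. *)

theory Defs
  imports "HOL-Analysis.Analysis"
begin

definition U_inf :: "nat set set" where
  "U_inf = {u. finite u}"

text \<open>Weights: nonnegative reals indexed by U_infinity (values at infinite sets are irrelevant).\<close>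
definition W_inf :: "(nat set \<Rightarrow> real) set" where
  "W_inf = {\<gamma>. \<forall>u\<in>U_inf. 0 \<le> \<gamma> u}"

definition S_inf :: "real \<Rightarrow> (nat set \<Rightarrow> real) set" where
  "S_inf C = {\<gamma> \<in> W_inf. (\<lambda>v. C ^ (2 * card v) * \<gamma> v) summable_on U_inf}"

definition T_up :: "real \<Rightarrow> (nat set \<Rightarrow> real) \<Rightarrow> (nat set \<Rightarrow> real)" where
  "T_up C \<gamma> = (\<lambda>u. \<Sum>\<^sub>\<infinity>v\<in>{v \<in> U_inf. u \<subseteq> v}. C ^ (2 * card v) * \<gamma> v)"

definition wpow :: "real \<Rightarrow> (nat set \<Rightarrow> real) \<Rightarrow> (nat set \<Rightarrow> real)" where
  "wpow \<tau> \<gamma> = (\<lambda>u. \<gamma> u powr (1 / \<tau>))"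

end

theory Submission
  imports Defs
begin

lemma powr_infsum_le:
  fixes a :: "'a \<Rightarrow> real"
  assumes sa: "a summable_on A" and sp: "(\<lambda>v. a v powr p) summable_on A"
    and nn: "\<And>v. v \<in> A \<Longrightarrow> a v \<ge> 0" and p: "0 < p" "p \<le> 1"
  shows "(infsum a A) powr p \<le> (\<Sum>\<^sub>\<infinity>v\<in>A. a v powr p)"
proof -
  define S where "S = (\<Sum>\<^sub>\<infinity>v\<in>A. a v powr p)"
  define q where "q = (1 - p) / p"
  have q0: "q \<ge> 0" using p by (simp add: q_def)
  have S0: "S \<ge> 0" unfolding S_def by (rule infsum_nonneg) auto
  have single: "a v powr p \<le> S" if "v \<in> A" for v
  proof -
    have "sum (\<lambda>v. a v powr p) {v} \<le> S" unfolding S_def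
      by (rule finite_sum_le_infsum[OF sp]) (use that in auto)
    then show ?thesis by simp
  qed
  have pt: "a v \<le> a v powr p * S powr q" if "v \<in> A" for v
  proof (cases "a v = 0")
    case True then show ?thesis by simp
  next
    case False
    then have av: "a v > 0" using nn[OF that] by simp
    have "(a v powr p) powr q \<le> S powr q"
      by (rule powr_mono2[OF q0]) (use single[OF that] in auto)
    moreover have "(a v powr p) powr q = a v powr (1 - p)"
      using p by (simp add: powr_powr q_def)
    ultimately have "a v powr p * a v powr (1 - p) \<le> a v powr p * S powr q"
      by (simp add: mult_left_mono)
    moreover have "a v powr p * a v powr (1 - p) = a v"
      using av by (simp add: powr_add[symmetric])
    ultimately show ?thesis by simp
  qed
  have "infsum a A \<le> (\<Sum>\<^sub>\<infinity>v\<in>A. a v powr p * S powr q)"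
    by (rule infsum_mono[OF sa]) (use pt sp summable_on_cmult_left in auto)
  also have "\<dots> = S * S powr q"
    unfolding S_def by (rule infsum_cmult_left) (use sp in auto)
  also have "\<dots> = S powr (1 / p)"
  proof (cases "S = 0")
    case True then show ?thesis by simp
  next
    case False
    then have "S > 0" using S0 by simp
    then have "S * S powr q = S powr (1 + q)" by (simp add: powr_add)
    also have "1 + q = 1 / p" using p by (simp add: q_def field_simps)
    finally show ?thesis .
  qed
  finally have le: "infsum a A \<le> S powr (1 / p)" .
  have "(infsum a A) powr p \<le> (S powr (1 / p)) powr p"
    by (rule powr_mono2) (use p le infsum_nonneg nn in auto)
  also have "\<dots> = S" using p S0 by (simp add: powr_powr)
  finally show ?thesis unfolding S_def .
qed



lemma pow_powr_eq:
  fixes C x p :: real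
  assumes "C > 0" "x \<ge> 0"
  shows "(C powr p) ^ (2 * n) * x powr p = (C ^ (2 * n) * x) powr p"
proof -
  have "(C ^ (2 * n) * x) powr p = (C ^ (2 * n)) powr p * x powr p"
    by (rule powr_mult)
  moreover have "(C ^ (2 * n)) powr p = (C powr p) ^ (2 * n)"
    using assms by (simp add: powr_realpow[symmetric] powr_powr powr_power mult.commute)
  ultimately show ?thesis by simp
qed

lemma sqrt2_pow: "(sqrt 2 * y) ^ (2 * n) = 2 ^ n * (y::real) ^ (2 * n)"
  by (simp add: power_mult_distrib power_mult)

theorem mainTheorem5:
  fixes C :: real and \<gamma> :: "nat set \<Rightarrow> real"
  assumes "C > 0" and "\<gamma> \<in> S_inf C"
  shows "(\<forall>\<tau>>0. wpow \<tau> (T_up C \<gamma>) summable_on U_inf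
              \<longrightarrow> wpow \<tau> \<gamma> \<in> S_inf (C powr (1 / \<tau>)))
       \<and> (\<forall>\<tau>\<ge>1. wpow \<tau> \<gamma> \<in> S_inf (sqrt 2 * C powr (1 / \<tau>))
              \<longrightarrow> wpow \<tau> (T_up C \<gamma>) summable_on U_inf)"
proof -
  define a where "a v = C ^ (2 * card v) * \<gamma> v" for v
  have ann: "a v \<ge> 0" if "v \<in> U_inf" for v
    using assms that unfolding a_def S_inf_def W_inf_def by auto
  have gnn: "\<gamma> v \<ge> 0" if "v \<in> U_inf" for v
    using assms that unfolding S_inf_def W_inf_def by auto
  have asum: "a summable_on U_inf"
    using assms unfolding a_def S_inf_def by auto
  have asub: "a summable_on {v \<in> U_inf. u \<subseteq> v}" for u
    by (rule summable_on_subset[OF asum]) auto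
  have Tup: "T_up C \<gamma> u = infsum a {v \<in> U_inf. u \<subseteq> v}" for u
    unfolding T_up_def a_def by simp
  have Tge: "a u \<le> T_up C \<gamma> u" if "u \<in> U_inf" for u
  proof -
    have "sum a {u} \<le> infsum a {v \<in> U_inf. u \<subseteq> v}"
      by (rule finite_sum_le_infsum[OF asub]) (use that ann in auto)
    then show ?thesis using Tup by simp
  qed
  have wpowW: "wpow \<tau> g \<in> W_inf" for \<tau> g
    unfolding wpow_def W_inf_def by auto
  have eqb: "(C powr (1/\<tau>)) ^ (2 * card v) * wpow \<tau> \<gamma> v = a v powr (1/\<tau>)"
    if "v \<in> U_inf" for v \<tau>
    unfolding wpow_def a_def using pow_powr_eq[OF assms(1) gnn[OF that]] by simp
  show ?thesis
  proof (intro conjI allI impI)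
    fix \<tau> :: real
    assume t: "\<tau> > 0" and sm: "wpow \<tau> (T_up C \<gamma>) summable_on U_inf"
    have "(\<lambda>v. a v powr (1/\<tau>)) summable_on U_inf"
    proof (rule summable_on_comparison_test[OF sm])
      fix x assume x: "x \<in> U_inf"
      show "a x powr (1 / \<tau>) \<le> wpow \<tau> (T_up C \<gamma>) x"
        unfolding wpow_def by (rule powr_mono2) (use t ann[OF x] Tge[OF x] in auto)
    qed auto
    then have "(\<lambda>v. (C powr (1/\<tau>)) ^ (2 * card v) * wpow \<tau> \<gamma> v) summable_on U_inf"
      by (rule summable_on_cong[THEN iffD2, rotated]) (use eqb in auto)
    then show "wpow \<tau> \<gamma> \<in> S_inf (C powr (1 / \<tau>))"
      unfolding S_inf_def using wpowW by auto
  next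
    fix \<tau> :: real
    assume t: "\<tau> \<ge> 1" and hs: "wpow \<tau> \<gamma> \<in> S_inf (sqrt 2 * C powr (1 / \<tau>))"
    define p where "p = 1 / \<tau>"
    have p: "0 < p" "p \<le> 1" using t by (auto simp: p_def)
    define b where "b v = a v powr p" for v
    have bnn: "b v \<ge> 0" for v unfolding b_def by simp
    have h2: "(\<lambda>v. 2 ^ card v * b v) summable_on U_inf"
    proof -
      have "(\<lambda>v. (sqrt 2 * C powr p) ^ (2 * card v) * wpow \<tau> \<gamma> v) summable_on U_inf"
        using hs unfolding S_inf_def p_def by auto
      then show ?thesis
        by (rule summable_on_cong[THEN iffD1, rotated])
           (use eqb in \<open>auto simp: sqrt2_pow b_def p_def\<close>)
    qed
    have bsum: "b summable_on U_inf"
    proof (rule summable_on_comparison_test[OF h2])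
    fix x
    have "1 * b x \<le> 2 ^ card x * b x"
      by (rule mult_right_mono) (auto simp: bnn)
    then show "b x \<le> 2 ^ card x * b x" by simp
  qed (use bnn in auto)
    have sig: "(\<lambda>(v,u). b v) summable_on Sigma U_inf Pow"
    proof (rule summable_on_SigmaI[where g = "\<lambda>v. 2 ^ card v * b v"])
      fix v assume v: "v \<in> U_inf"
      then have "finite v" by (simp add: U_inf_def)
      then show "((\<lambda>y. case (v, y) of (v, u) \<Rightarrow> b v) has_sum 2 ^ card v * b v) (Pow v)"
        by (intro has_sum_finiteI) (auto simp: card_Pow)
    qed (use h2 bnn in auto)
    have eqset: "prod.swap ` Sigma U_inf Pow = Sigma U_inf (\<lambda>u. {v \<in> U_inf. u \<subseteq> v})"
    proof (intro equalityI subsetI)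
      fix z assume "z \<in> prod.swap ` Sigma U_inf Pow"
      then obtain v u where "z = (u, v)" "v \<in> U_inf" "u \<subseteq> v" by auto
      then show "z \<in> Sigma U_inf (\<lambda>u. {v \<in> U_inf. u \<subseteq> v})"
        by (auto simp: U_inf_def intro: finite_subset)
    next
      fix z assume "z \<in> Sigma U_inf (\<lambda>u. {v \<in> U_inf. u \<subseteq> v})"
      then obtain v u where z: "z = (u, v)" "v \<in> U_inf" "u \<subseteq> v" by auto
      then have "(v, u) \<in> Sigma U_inf Pow" by auto
      then show "z \<in> prod.swap ` Sigma U_inf Pow"
        using z by (metis image_eqI swap_simp)
    qed
    have "(\<lambda>(u,v). b v) summable_on prod.swap ` Sigma U_inf Pow"
      by (subst summable_on_reindex) (use sig in \<open>auto simp: o_def case_prod_unfold\<close>)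
    then have sig2: "(\<lambda>(u,v). b v) summable_on Sigma U_inf (\<lambda>u. {v \<in> U_inf. u \<subseteq> v})"
      using eqset by simp
    have bsub: "b summable_on {v \<in> U_inf. u \<subseteq> v}" for u
      by (rule summable_on_subset[OF bsum]) auto
    have F: "(\<lambda>u. infsum (\<lambda>v. (\<lambda>(u,v). b v) (u, v)) {v \<in> U_inf. u \<subseteq> v}) summable_on U_inf"
      by (rule summable_on_SigmaD[OF sig2]) (use bsub in auto)
    show "wpow \<tau> (T_up C \<gamma>) summable_on U_inf"
    proof (rule summable_on_comparison_test[OF F])
      fix u assume u: "u \<in> U_inf"
      have "wpow \<tau> (T_up C \<gamma>) u = (infsum a {v \<in> U_inf. u \<subseteq> v}) powr p"
        unfolding wpow_def Tup p_def ..
      also have "\<dots> \<le> infsum b {v \<in> U_inf. u \<subseteq> v}"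
        unfolding b_def by (rule powr_infsum_le[OF asub bsub[unfolded b_def] _ p]) (use ann in auto)
      finally show "wpow \<tau> (T_up C \<gamma>) u \<le> (\<Sum>\<^sub>\<infinity>v\<in>{v \<in> U_inf. u \<subseteq> v}. case (u, v) of (u, v) \<Rightarrow> b v)"
        by simp
    qed (auto simp: wpow_def)
  qed
qed

end
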